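(* Let $1<\alpha\leq 2$ and $c_\alpha=\frac{\alpha-1}{\alpha}\vee \sqrt{\frac{2-\alpha}{\alpha}}$. Then $1+y+c_\alpha|y|^\alpha>0$ for all $y\in\mathbb R$, and \[ -\log(1+y+c_\alpha |y|^\alpha)\leq \log(1-y +c_\alpha |y|^{\alpha}) \quad \text{for all } y\in \mathbb R. \]
   Context: $a\vee b=\max(a,b)$. *)

theory Defs
  imports Complex_Main
begin

definition c_alpha :: "real \<Rightarrow> real" where
  "c_alpha \<alpha> = max ((\<alpha> - 1) / \<alpha>) (sqrt ((2 - \<alpha>) / \<alpha>))"

end

theory Submission
  imports Defs "HOL-Analysis.Analysis"
begin

lemma key:
  fixes \<alpha> t :: real
  assumes a1: "1 < \<alpha>" and a2: "\<alpha> \<le> 2" and t: "0 \<le> t"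
  shows "t^2 \<le> 2 * c_alpha \<alpha> * t powr \<alpha> + (c_alpha \<alpha> * t powr \<alpha>)^2"
proof (cases "t = 0")
  case True then show ?thesis by simp
next
  case False
  define c where "c = c_alpha \<alpha>"
  define s where "s = t powr \<alpha>"
  define l where "l = 2 - 2/\<alpha>"
  define m where "m = 2/\<alpha> - 1"
  have tp: "t > 0" using t False by simp
  have sp: "s > 0" using tp by (simp add: s_def)
  have l0: "0 \<le> l" using a1 by (simp add: l_def field_simps)
  have m0: "0 \<le> m" using a1 a2 by (simp add: m_def field_simps)
  have lm: "l + m = 1" by (simp add: l_def m_def)
  have c1: "(\<alpha> - 1)/\<alpha> \<le> c" by (simp add: c_def c_alpha_def)
  have c2: "sqrt ((2-\<alpha>)/\<alpha>) \<le> c" by (simp add: c_def c_alpha_def)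
  have "0 \<le> (\<alpha> - 1)/\<alpha>" using a1 by simp
  hence c0: "0 \<le> c" using c1 by linarith
  have lc: "l \<le> 2*c" using c1 a1 by (simp add: l_def field_simps)
  have "m = (sqrt ((2-\<alpha>)/\<alpha>))^2" using a1 a2 by (simp add: m_def field_simps)
  also have "\<dots> \<le> c^2" using c2 a1 a2 by (intro power_mono) auto
  finally have mc: "m \<le> c^2" .
  have Y: "s powr l * (s^2) powr m \<le> l * s + m * (s^2)"
    using Youngs_inequality_0[OF l0 m0 lm sp, of "s^2"] sp by simp
  have s2: "s^2 = s powr 2" using sp powr_realpow[of s 2] by simp
  have "(s^2) powr m = s powr (2*m)"
    unfolding s2 by (simp add: powr_powr)
  hence "s powr l * (s^2) powr m = s powr (l + 2*m)" by (simp add: powr_add)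
  also have "l + 2*m = 2/\<alpha>" by (simp add: l_def m_def)
  also have "s powr (2/\<alpha>) = t powr 2" using a1 by (simp add: s_def powr_powr)
  also have "\<dots> = t^2" using tp by (simp add: powr_realpow)
  finally have "t^2 \<le> l * s + m * (s^2)" using Y by simp
  also have "\<dots> \<le> 2 * c * s + c^2 * (s^2)"
  proof -
    have "l * s \<le> 2 * c * s" using mult_right_mono[OF lc, of s] sp by simp
    moreover have "m * (s^2) \<le> c^2 * (s^2)" using mult_right_mono[OF mc, of "s^2"] by simp
    ultimately show ?thesis by linarith
  qed
  finally show ?thesis by (simp add: c_def s_def power_mult_distrib)
qed

theorem lemmaA2:
  fixes \<alpha> :: real
  assumes "1 < \<alpha>" and "\<alpha> \<le> 2"
  shows "(\<forall>y::real. 1 + y + c_alpha \<alpha> * \<bar>y\<bar> powr \<alpha> > 0) \<and>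
         (\<forall>y::real. - ln (1 + y + c_alpha \<alpha> * \<bar>y\<bar> powr \<alpha>)
                     \<le> ln (1 - y + c_alpha \<alpha> * \<bar>y\<bar> powr \<alpha>))"
proof -
  have c0: "0 \<le> c_alpha \<alpha>"
    unfolding c_alpha_def using assms by (intro max.coboundedI1) simp
  have P: "1 + y + c_alpha \<alpha> * \<bar>y\<bar> powr \<alpha> > 0 \<and> 1 - y + c_alpha \<alpha> * \<bar>y\<bar> powr \<alpha> > 0
     \<and> (1 + y + c_alpha \<alpha> * \<bar>y\<bar> powr \<alpha>) * (1 - y + c_alpha \<alpha> * \<bar>y\<bar> powr \<alpha>) \<ge> 1" for y :: real
  proof -
    define g where "g = c_alpha \<alpha> * \<bar>y\<bar> powr \<alpha>"
    have g0: "g \<ge> 0" using c0 by (simp add: g_def)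
    have k: "\<bar>y\<bar>^2 \<le> 2*g + g^2" using key[OF assms, of "\<bar>y\<bar>"] by (simp add: g_def)
    have prod: "(1+y+g)*(1-y+g) = 1 + 2*g + g^2 - y^2" by (simp add: algebra_simps power2_eq_square)
    have AB: "(1+y+g)*(1-y+g) \<ge> 1" using prod k by simp
    have "1+y+g > 0"
    proof (rule ccontr)
      assume "\<not> 1+y+g > 0"
      moreover have "1-y+g > 0 \<or> 1-y+g \<le> 0" by auto
      ultimately show False using AB g0
        by (smt (verit) mult_nonneg_nonpos2)
    qed
    moreover have "1-y+g > 0"
    proof (rule ccontr)
      assume "\<not> 1-y+g > 0"
      then show False using AB g0 \<open>1+y+g > 0\<close>
        by (smt (verit) mult_pos_neg mult_nonneg_nonpos)
    qed
    ultimately show ?thesis using AB by (simp add: g_def)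
  qed
  show ?thesis
  proof (intro conjI allI)
    fix y :: real
    show "1 + y + c_alpha \<alpha> * \<bar>y\<bar> powr \<alpha> > 0" using P by blast
    show "- ln (1 + y + c_alpha \<alpha> * \<bar>y\<bar> powr \<alpha>) \<le> ln (1 - y + c_alpha \<alpha> * \<bar>y\<bar> powr \<alpha>)"
    proof -
      define A where "A = 1 + y + c_alpha \<alpha> * \<bar>y\<bar> powr \<alpha>"
      define B where "B = 1 - y + c_alpha \<alpha> * \<bar>y\<bar> powr \<alpha>"
      have "A > 0" "B > 0" "A*B \<ge> 1" using P[of y] by (auto simp: A_def B_def)
      hence "ln (A*B) \<ge> 0" by simp
      hence "ln A + ln B \<ge> 0" using \<open>A>0\<close> \<open>B>0\<close> by (simp add: ln_mult)
      thus ?thesis by (simp add: A_def B_def)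
    qed
  qed
qed

end
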